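(* Consider the Hamiltonian control system described in the context satisfying (A1), (A2), and suppose (A5) holds with constant $\epsilon$. Then for all $x\in\mathcal{X}\setminus H_{\mathrm{tgt}}$, $$v_\epsilon(x)\le L_H C_f \quad\text{and}\quad T_\epsilon^\star(x)\ge \frac{\epsilon}{L_H C_f}.$$
   Context: System: $\dot x = f(x,u)=J(x)\nabla H(x)+G(x)u$, with state $x\in\mathcal{X}\subset\mathbb{R}^n$, $\mathcal{X}$ compact, $H:\mathbb{R}^n\to\mathbb{R}$, $J(x)$ skew-symmetric, input $u\in U\subset\mathbb{R}^m$, $U$ compact. Admissible control signals are piecewise continuous measurable maps into $U$; $\phi(t,x,u)$ denotes the state at time $t$ from $x$ under $u$. (A1) $H$ is $C^1$ on $\mathcal{X}$ and $\|\nabla H(x)\|\le L_H$ on $\mathcal{X}$. (A2) There is $L>0$ with $\|f(x_1,u)-f(x_2,u)\|\le L\|x_1-x_2\|$ for all $x_1,x_2\in\mathcal{X}$, $u\in U$. $C_f>0$ is a constant with $\|f(x,u)\|\le C_f$ for all $x\in\mathcal{X}$, $u\in U$. Target: $S_{\mathrm{tgt}}\subseteq\mathcal{X}$ compact and connected, $H(S_{\mathrm{tgt}})=[H_{\min},H_{\max}]$, $H_+^\star=(H_{\max}+H_{\min})/2$, $H_-^\star=(H_{\max}-H_{\min})/2$, $\Delta H(x):=|H(x)-H_+^\star|-H_-^\star$; $H_{\mathrm{tgt}}:=\{x\in\mathcal{X}:\Delta H(x)\le0\}$, and for $0<\epsilon<H_-^\star$, $H_{\mathrm{tgt}}^\epsilon:=\{x\in\mathcal{X}:\Delta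 H(x)\le-\epsilon\}$. $T_\epsilon(x,u):=\inf\{t>0:\phi(t,x,u)\in H_{\mathrm{tgt}}^\epsilon\}$, $T_\epsilon^\star(x):=\inf_u T_\epsilon(x,u)$, $v_\epsilon(x):=(\Delta H(x)+\epsilon)/T_\epsilon^\star(x)$. (A5) There exists $\epsilon>0$ with $\inf_{x\in\mathcal{X}\setminus H_{\mathrm{tgt}}^\epsilon}v_\epsilon(x)>0$. *)

theory Defs
  imports "HOL-Analysis.Analysis"
begin

definition ham_field ::
  "(real^'n \<Rightarrow> real^'n^'n) \<Rightarrow> (real^'n \<Rightarrow> real^'n) \<Rightarrow> (real^'n \<Rightarrow> real^'m^'n)
    \<Rightarrow> real^'n \<Rightarrow> real^'m \<Rightarrow> real^'n" where
  "ham_field J gradH G x u = J x *v gradH x + G x *v u"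

definition piecewise_continuous :: "(real \<Rightarrow> 'a::topological_space) \<Rightarrow> bool" where
  "piecewise_continuous u \<longleftrightarrow>
     (\<forall>T\<ge>0. \<exists>S. finite S \<and> (\<forall>t\<in>{0..T} - S. continuous (at t within {0..T}) u))"

definition admissible :: "(real^'m) set \<Rightarrow> (real \<Rightarrow> real^'m) \<Rightarrow> bool" where
  "admissible U u \<longleftrightarrow> (\<forall>t\<ge>0. u t \<in> U) \<and> u \<in> borel_measurable lborel \<and> piecewise_continuous u"

definition Hplus :: "real \<Rightarrow> real \<Rightarrow> real" where
  "Hplus Hmin Hmax = (Hmax + Hmin) / 2"

definition Hminus :: "real \<Rightarrow> real \<Rightarrow> real" where
  "Hminus Hmin Hmax = (Hmax - Hmin) / 2"

definition DeltaH :: "(real^'n \<Rightarrow> real) \<Rightarrow> real \<Rightarrow> real \<Rightarrow> real^'n \<Rightarrow> real" where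
  "DeltaH H Hmin Hmax x = \<bar>H x - Hplus Hmin Hmax\<bar> - Hminus Hmin Hmax"

definition H_tgt :: "(real^'n) set \<Rightarrow> (real^'n \<Rightarrow> real) \<Rightarrow> real \<Rightarrow> real \<Rightarrow> (real^'n) set" where
  "H_tgt X H Hmin Hmax = {x\<in>X. DeltaH H Hmin Hmax x \<le> 0}"

definition H_tgt_eps ::
  "(real^'n) set \<Rightarrow> (real^'n \<Rightarrow> real) \<Rightarrow> real \<Rightarrow> real \<Rightarrow> real \<Rightarrow> (real^'n) set" where
  "H_tgt_eps X H Hmin Hmax \<epsilon> = {x\<in>X. DeltaH H Hmin Hmax x \<le> - \<epsilon>}"

text \<open>Hitting time T_eps(x,u) (infimum of the empty set is +oo).\<close>
definition T_eps ::
  "(real \<Rightarrow> real^'n \<Rightarrow> (real \<Rightarrow> real^'m) \<Rightarrow> real^'n) \<Rightarrow> (real^'n) set \<Rightarrow> (real^'n \<Rightarrow> real)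
    \<Rightarrow> real \<Rightarrow> real \<Rightarrow> real \<Rightarrow> real^'n \<Rightarrow> (real \<Rightarrow> real^'m) \<Rightarrow> ereal" where
  "T_eps phi X H Hmin Hmax \<epsilon> x u =
     Inf (ereal ` {t. t > 0 \<and> phi t x u \<in> H_tgt_eps X H Hmin Hmax \<epsilon>})"

definition T_star ::
  "(real \<Rightarrow> real^'n \<Rightarrow> (real \<Rightarrow> real^'m) \<Rightarrow> real^'n) \<Rightarrow> (real^'m) set \<Rightarrow> (real^'n) set
    \<Rightarrow> (real^'n \<Rightarrow> real) \<Rightarrow> real \<Rightarrow> real \<Rightarrow> real \<Rightarrow> real^'n \<Rightarrow> ereal" where
  "T_star phi U X H Hmin Hmax \<epsilon> x =
     (INF u\<in>{u. admissible U u}. T_eps phi X H Hmin Hmax \<epsilon> x u)"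

definition v_eps ::
  "(real \<Rightarrow> real^'n \<Rightarrow> (real \<Rightarrow> real^'m) \<Rightarrow> real^'n) \<Rightarrow> (real^'m) set \<Rightarrow> (real^'n) set
    \<Rightarrow> (real^'n \<Rightarrow> real) \<Rightarrow> real \<Rightarrow> real \<Rightarrow> real \<Rightarrow> real^'n \<Rightarrow> ereal" where
  "v_eps phi U X H Hmin Hmax \<epsilon> x =
     ereal (DeltaH H Hmin Hmax x + \<epsilon>) / T_star phi U X H Hmin Hmax \<epsilon> x"

end

theory Submission
  imports Defs
begin

lemma traj_lip:
  fixes F :: "real \<Rightarrow> real^'n" and p :: "real \<Rightarrow> real^'n"
  assumes sol: "\<And>t. t \<ge> 0 \<Longrightarrow> F integrable_on {0..t} \<and> p t = x + integral {0..t} F"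
    and bnd: "\<And>s. s \<ge> 0 \<Longrightarrow> norm (F s) \<le> C"
    and C: "C \<ge> 0"
    and st: "0 \<le> s" "s \<le> t"
  shows "norm (p t - p s) \<le> C * (t - s)"
proof -
  have int: "F integrable_on {0..t}" using sol st by auto
  have "p t - p s = integral {s..t} F"
    using sol[of t] sol[of s] st Henstock_Kurzweil_Integration.integral_combine[OF st int] by (simp add: algebra_simps)
  moreover have "F integrable_on {s..t}"
    using int st integrable_subinterval_real by fastforce
  hence "norm (integral {s..t} F) \<le> C * Henstock_Kurzweil_Integration.content {s..t}"
    using st bnd C by (intro has_integral_bound_real[where S="{}"]) auto
  ultimately show ?thesis using st by simp
qed

lemma H_lip_traj:
  fixes g :: "real \<Rightarrow> real^'n" and H :: "real^'n \<Rightarrow> real"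
  assumes gl: "\<And>s t. 0 \<le> s \<Longrightarrow> s \<le> t \<Longrightarrow> norm (g t - g s) \<le> C * (t - s)"
    and C: "C \<ge> 0"
    and der: "\<And>t. t \<ge> 0 \<Longrightarrow> (H has_derivative (\<lambda>h. gradH (g t) \<bullet> h)) (at (g t))"
    and gb: "\<And>t. t \<ge> 0 \<Longrightarrow> norm (gradH (g t)) \<le> LH"
    and T: "T \<ge> 0"
  shows "\<bar>H (g T) - H (g 0)\<bar> \<le> LH * C * T"
proof -
  have main: "\<bar>H (g T) - H (g 0)\<bar> \<le> (LH + e) * C * T" if e: "e > 0" for e
  proof -
    define P where "P a b \<longleftrightarrow> (0 \<le> a \<longrightarrow> b \<le> T \<longrightarrow> \<bar>H (g b) - H (g a)\<bar> \<le> (LH + e) * C * (b - a))" for a b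
    have "P 0 T" using T
    proof (induction rule: Bolzano)
      case (trans a b c)
      then show ?case unfolding P_def by (smt (verit) distrib_left)
    next
      case (local x)
      have x0: "x \<ge> 0" using local by simp
      obtain d where d: "d > 0" and dd: "\<And>y. norm (y - g x) < d \<Longrightarrow>
          norm (H y - H (g x) - gradH (g x) \<bullet> (y - g x)) \<le> e * norm (y - g x)"
        using der[OF x0] e unfolding has_derivative_at_alt by blast
      have loc: "\<bar>H (g s) - H (g x)\<bar> \<le> (LH + e) * C * \<bar>s - x\<bar>"
        if s: "s \<ge> 0" "\<bar>s - x\<bar> < d / (C + 1)" for s
      proof -
        have n: "norm (g s - g x) \<le> C * \<bar>s - x\<bar>"
          using gl[of s x] gl[of x s] s x0 by (cases "s \<le> x") (auto simp: norm_minus_commute)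
        have "C * \<bar>s - x\<bar> \<le> (C+1) * \<bar>s - x\<bar>" by (simp add: mult_right_mono)
        also have "\<dots> < d" using s C by (simp add: field_simps)
        finally have "norm (g s - g x) < d" using n by linarith
        from dd[OF this] have A: "\<bar>H (g s) - H (g x) - gradH (g x) \<bullet> (g s - g x)\<bar> \<le> e * norm (g s - g x)" by simp
        have B: "\<bar>gradH (g x) \<bullet> (g s - g x)\<bar> \<le> LH * norm (g s - g x)"
          using Cauchy_Schwarz_ineq2[of "gradH (g x)" "g s - g x"] gb[OF x0]
          by (meson mult_right_mono norm_ge_zero order_trans)
        have "\<bar>H (g s) - H (g x)\<bar> \<le> (LH + e) * norm (g s - g x)"
          using A B by (simp add: distrib_right)
        also have "\<dots> \<le> (LH + e) * (C * \<bar>s - x\<bar>)"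
          apply (rule mult_left_mono[OF n])
          using gb[OF x0] e norm_ge_zero[of "gradH (g x)"] by linarith
        finally show ?thesis by (simp add: mult.assoc)
      qed
      show ?case
      proof (intro exI[of _ "d / (C + 1)"] conjI allI impI)
        show "d / (C + 1) > 0" using d C by simp
      next
        fix a b assume ab: "a \<le> x \<and> x \<le> b \<and> b - a < d / (C + 1)"
        show "P a b" unfolding P_def
        proof (intro impI)
          assume a0: "0 \<le> a" and "b \<le> T"
          have "\<bar>H (g b) - H (g x)\<bar> \<le> (LH + e) * C * \<bar>b - x\<bar>" using ab a0 by (intro loc) auto
          moreover have "\<bar>H (g a) - H (g x)\<bar> \<le> (LH + e) * C * \<bar>a - x\<bar>" using ab a0 by (intro loc) auto
          ultimately have "\<bar>H (g b) - H (g a)\<bar> \<le> (LH + e) * C * \<bar>b - x\<bar> + (LH + e) * C * \<bar>a - x\<bar>" by linarith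
          also have "\<dots> = (LH + e) * C * (b - a)" using ab by (simp add: algebra_simps)
          finally show "\<bar>H (g b) - H (g a)\<bar> \<le> (LH + e) * C * (b - a)" .
        qed
      qed
    qed
    thus ?thesis using T unfolding P_def by simp
  qed
  show ?thesis
  proof (rule field_le_epsilon)
    fix e :: real assume e: "e > 0"
    have "\<bar>H (g T) - H (g 0)\<bar> \<le> (LH + e / (C * T + 1)) * C * T" using e C T by (intro main) (simp add: add_nonneg_pos)
    also have "\<dots> = LH * C * T + e * (C * T / (C * T + 1))" using C T by (simp add: field_simps)
    also have "\<dots> \<le> LH * C * T + e * 1" using C T e by (intro add_left_mono mult_left_mono) (auto simp: divide_le_eq_1 add_nonneg_pos)
    finally show "\<bar>H (g T) - H (g 0)\<bar> \<le> LH * C * T + e" by simp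
  qed
qed

theorem mainTheorem2:
  fixes X :: "(real^'n) set" and U :: "(real^'m) set"
    and H :: "real^'n \<Rightarrow> real" and gradH :: "real^'n \<Rightarrow> real^'n"
    and J :: "real^'n \<Rightarrow> real^'n^'n" and G :: "real^'n \<Rightarrow> real^'m^'n"
    and phi :: "real \<Rightarrow> real^'n \<Rightarrow> (real \<Rightarrow> real^'m) \<Rightarrow> real^'n"
    and S_tgt :: "(real^'n) set"
    and L_H L C_f Hmin Hmax \<epsilon> :: real
  assumes X: "compact X" and U: "compact U"
    and skew: "\<And>x. transpose (J x) = - J x"
    \<comment> \<open>(A1): H is C^1 on X with gradient gradH, bounded by L_H\<close>
    and A1_deriv: "\<And>x. x \<in> X \<Longrightarrow> (H has_derivative (\<lambda>h. gradH x \<bullet> h)) (at x)"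
    and A1_cont: "continuous_on X gradH"
    and A1_bound: "\<And>x. x \<in> X \<Longrightarrow> norm (gradH x) \<le> L_H"
    \<comment> \<open>(A2): Lipschitz in the state\<close>
    and L_pos: "L > 0"
    and A2: "\<And>x1 x2 u. x1 \<in> X \<Longrightarrow> x2 \<in> X \<Longrightarrow> u \<in> U \<Longrightarrow>
               norm (ham_field J gradH G x1 u - ham_field J gradH G x2 u) \<le> L * norm (x1 - x2)"
    and Cf_pos: "C_f > 0"
    and Cf: "\<And>x u. x \<in> X \<Longrightarrow> u \<in> U \<Longrightarrow> norm (ham_field J gradH G x u) \<le> C_f"
    \<comment> \<open>phi is the state trajectory (Caratheodory solution), evolving in X\<close>
    and phi_in: "\<And>x u t. x \<in> X \<Longrightarrow> admissible U u \<Longrightarrow> t \<ge> 0 \<Longrightarrow> phi t x u \<in> X"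
    and phi_sol: "\<And>x u t. x \<in> X \<Longrightarrow> admissible U u \<Longrightarrow> t \<ge> 0 \<Longrightarrow>
               (\<lambda>s. ham_field J gradH G (phi s x u) (u s)) integrable_on {0..t} \<and>
               phi t x u = x + integral {0..t} (\<lambda>s. ham_field J gradH G (phi s x u) (u s))"
    \<comment> \<open>target set\<close>
    and S_sub: "S_tgt \<subseteq> X" and S_compact: "compact S_tgt" and S_conn: "connected S_tgt"
    and S_img: "H ` S_tgt = {Hmin..Hmax}"
    and eps: "0 < \<epsilon>" "\<epsilon> < Hminus Hmin Hmax"
    \<comment> \<open>(A5) with constant epsilon\<close>
    and A5: "\<exists>c>0. \<forall>x \<in> X - H_tgt_eps X H Hmin Hmax \<epsilon>.
               ereal c \<le> v_eps phi U X H Hmin Hmax \<epsilon> x"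
  shows "\<forall>x \<in> X - H_tgt X H Hmin Hmax.
           v_eps phi U X H Hmin Hmax \<epsilon> x \<le> ereal (L_H * C_f) \<and>
           ereal (\<epsilon> / (L_H * C_f)) \<le> T_star phi U X H Hmin Hmax \<epsilon> x"
proof
  fix x assume xX: "x \<in> X - H_tgt X H Hmin Hmax"
  define D where "D = DeltaH H Hmin Hmax x"
  have x: "x \<in> X" and D: "D > 0" using xX unfolding D_def H_tgt_def by auto
  define K where "K = L_H * C_f"
  have LH0: "L_H \<ge> 0" using A1_bound[OF x] norm_ge_zero[of "gradH x"] by linarith
  have K0: "K \<ge> 0" unfolding K_def using LH0 Cf_pos by simp
  have key: "D + \<epsilon> \<le> K * t"
    if u: "admissible U u" and t: "t > 0" "phi t x u \<in> H_tgt_eps X H Hmin Hmax \<epsilon>" for u t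
  proof -
    define p where "p = (\<lambda>s. phi s x u)"
    define F where "F = (\<lambda>s. ham_field J gradH G (p s) (u s))"
    have sol: "\<And>t. t \<ge> 0 \<Longrightarrow> F integrable_on {0..t} \<and> p t = x + integral {0..t} F"
      unfolding p_def F_def using phi_sol[OF x u] by blast
    have pX: "\<And>s. s \<ge> 0 \<Longrightarrow> p s \<in> X" unfolding p_def using phi_in[OF x u] by blast
    have uU: "\<And>s. s \<ge> 0 \<Longrightarrow> u s \<in> U" using u unfolding admissible_def by blast
    have bnd: "\<And>s. s \<ge> 0 \<Longrightarrow> norm (F s) \<le> C_f" unfolding F_def using Cf pX uU by blast
    have p0: "p 0 = x" using sol[of 0] by simp
    have gl: "\<And>s t. 0 \<le> s \<Longrightarrow> s \<le> t \<Longrightarrow> norm (p t - p s) \<le> C_f * (t - s)"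
      using traj_lip[OF sol bnd] Cf_pos by simp
    have "\<bar>H (p t) - H (p 0)\<bar> \<le> L_H * C_f * t"
      using t Cf_pos pX A1_deriv A1_bound by (intro H_lip_traj[OF gl, where gradH=gradH]) auto
    hence hb: "\<bar>H (p t) - H x\<bar> \<le> K * t" using p0 K_def by simp
    have "DeltaH H Hmin Hmax (p t) \<le> - \<epsilon>" using t unfolding p_def H_tgt_eps_def by simp
    thus ?thesis using hb D_def unfolding DeltaH_def by (smt (verit))
  qed
  show "v_eps phi U X H Hmin Hmax \<epsilon> x \<le> ereal (L_H * C_f) \<and>
           ereal (\<epsilon> / (L_H * C_f)) \<le> T_star phi U X H Hmin Hmax \<epsilon> x"
  proof (cases "K = 0")
    case True
    have "T_eps phi X H Hmin Hmax \<epsilon> x u = \<infinity>" if u: "admissible U u" for u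
    proof -
      have "{t. t > 0 \<and> phi t x u \<in> H_tgt_eps X H Hmin Hmax \<epsilon>} = {}"
        using key[OF u] True D eps by force
      hence "ereal ` {t. t > 0 \<and> phi t x u \<in> H_tgt_eps X H Hmin Hmax \<epsilon>} = {}" by simp
      thus ?thesis unfolding T_eps_def by (metis Inf_empty top_ereal_def)
    qed
    hence "T_star phi U X H Hmin Hmax \<epsilon> x = \<infinity>" unfolding T_star_def
      by (simp add: top_ereal_def[symmetric])
    thus ?thesis unfolding v_eps_def using True K_def K0 by simp
  next
    case False
    hence Kp: "K > 0" using K0 by simp
    define r where "r = (D + \<epsilon>) / K"
    have Tr: "ereal r \<le> T_star phi U X H Hmin Hmax \<epsilon> x"
      unfolding T_star_def
    proof (rule INF_greatest)
      fix u assume "u \<in> {u. admissible U u}"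
      hence u: "admissible U u" by simp
      show "ereal r \<le> T_eps phi X H Hmin Hmax \<epsilon> x u" unfolding T_eps_def
      proof (rule Inf_greatest)
        fix y assume "y \<in> ereal ` {t. t > 0 \<and> phi t x u \<in> H_tgt_eps X H Hmin Hmax \<epsilon>}"
        then obtain t where y: "y = ereal t" and t: "t > 0" "phi t x u \<in> H_tgt_eps X H Hmin Hmax \<epsilon>" by blast
        have "D + \<epsilon> \<le> K * t" using key[OF u t] .
        hence "r \<le> t" unfolding r_def using Kp by (simp add: pos_divide_le_eq mult.commute)
        thus "ereal r \<le> y" using y by simp
      qed
    qed
    have rpos: "r > 0" unfolding r_def using D eps Kp by simp
    have "\<epsilon> / K \<le> r" unfolding r_def using D Kp by (simp add: divide_right_mono)
    hence A: "ereal (\<epsilon> / (L_H * C_f)) \<le> T_star phi U X H Hmin Hmax \<epsilon> x"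
      using Tr K_def by (metis ereal_less_eq(3) order_trans)
    have B: "v_eps phi U X H Hmin Hmax \<epsilon> x \<le> ereal (L_H * C_f)"
    proof (cases "T_star phi U X H Hmin Hmax \<epsilon> x")
      case (real s)
      hence rs: "r \<le> s" using Tr by simp
      hence sp: "s > 0" using rpos by simp
      have "D + \<epsilon> = K * r" unfolding r_def using Kp by simp
      also have "\<dots> \<le> K * s" using rs Kp by simp
      finally have "(D + \<epsilon>) / s \<le> K" using sp by (simp add: pos_divide_le_eq)
      thus ?thesis unfolding v_eps_def using real sp D_def K_def by simp
    next
      case PInf
      thus ?thesis unfolding v_eps_def using K0 K_def by simp
    next
      case MInf
      thus ?thesis using Tr by simp
    qed
    show ?thesis using A B by simp
  qed
qed

end
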